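(* Let $E$ be an Anderson $t$-module of dimension $d$ over $\mathscr O_L$ and $P$ a monic irreducible polynomial of $A$. Then the $P$-adic logarithm $\log_{\widetilde E,P}$ is injective on $\Omega_z^+=\{x\in\mathbb T_z(L_P)^d:v_P(x)>0\}$.
   Context: $\mathbb F_q$ finite field, $A=\mathbb F_q[\theta]$, $K=\mathbb F_q(\theta)$, $L/K$ finite, $\mathscr O_L$ integral closure of $A$ in $L$, $\tau$ the $q$-Frobenius. An Anderson $t$-module of dimension $d$ over $\mathscr O_L$ is an $\mathbb F_q$-algebra homomorphism $E:A\to M_d(\mathscr O_L)\{\tau\}$, $E_a=\sum_iE_{a,i}\tau^i$, with $(E_{a,0}-aI_d)^d=0$, $\deg_\tau E_\theta>0$. $\log_E=\sum l_n\tau^n$ is the unique series with $l_0=I_d$ and $\log_EE_a=E_{a,0}\log_E$. With $z$ an indeterminate fixed by $\tau$, $\widetilde E_a=\sum E_{a,i}z^i\tau^i$ and $\log_{\widetilde E}=\sum l_nz^n\tau^n$. $K_P$ is the $P$-adic completion of $K$, $\mathbb T_z(K_P)$ the Tate algebra in $z$ with Gauss valuation, $\mathbb T_z(L_P)=L\otimes_K\mathbb T_z(K_P)$, with $v_P(\sum f_i\otimes x_i)=\min v_P(x_i)$ for a fixed $A$-basis $(f_i)$ of $\mathscr O_L$, and minimum over coordinates on $d$-tuples. $\log_{\widetilde E,P}$ is $\log_{\widetilde E}$ viewed as a $P$-adic function; it converges on $\Omega_z^+$. *)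

theory Defs
  imports "HOL-Analysis.Finite_Cartesian_Product"
          "HOL-Computational_Algebra.Polynomial_Factorial"
          "HOL-Computational_Algebra.Fraction_Field"
          "HOL-Library.Extended_Real"
begin

text \<open>Setting: 'k is the finite field F_q (q = CARD('k)), A = 'k poly, K = 'k poly fract,
  L is a field 'l with a field embedding iota : K -> L, matrices are 'l^'d^'d (d = CARD('d)).\<close>

definition is_ring_hom :: "('a::ring_1 \<Rightarrow> 'b::ring_1) \<Rightarrow> bool" where
  "is_ring_hom f \<longleftrightarrow> f 0 = 0 \<and> f 1 = 1 \<and>
     (\<forall>x y. f (x + y) = f x + f y) \<and> (\<forall>x y. f (x * y) = f x * f y)"

definition embA :: "('k::field poly fract \<Rightarrow> 'l::field) \<Rightarrow> 'k poly \<Rightarrow> 'l" where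
  "embA \<iota> a = \<iota> (Fract a 1)"

definition finite_ext :: "('k::field poly fract \<Rightarrow> 'l::field) \<Rightarrow> bool" where
  "finite_ext \<iota> \<longleftrightarrow> (\<exists>(n::nat) (g::nat \<Rightarrow> 'l). \<forall>x. \<exists>c. x = (\<Sum>i<n. \<iota> (c i) * g i))"

definition OL :: "('k::field poly fract \<Rightarrow> 'l::field) \<Rightarrow> 'l set" where
  "OL \<iota> = {x. \<exists>p :: 'k poly poly. lead_coeff p = 1 \<and> poly (map_poly (embA \<iota>) p) x = 0}"

definition is_A_basis :: "('k::field poly fract \<Rightarrow> 'l::field) \<Rightarrow> ('b::finite \<Rightarrow> 'l) \<Rightarrow> bool" where
  "is_A_basis \<iota> f \<longleftrightarrow>
     (\<forall>x. x \<in> OL \<iota> \<longleftrightarrow> (\<exists>c :: 'b \<Rightarrow> 'k poly. x = (\<Sum>b\<in>UNIV. embA \<iota> (c b) * f b))) \<and>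
     (\<forall>c :: 'b \<Rightarrow> 'k poly. (\<Sum>b\<in>UNIV. embA \<iota> (c b) * f b) = 0 \<longrightarrow> (\<forall>b. c b = 0))"

text \<open>K-coordinates of an element of L in the basis f (an A-basis of O_L is a K-basis of L).\<close>
definition coordK :: "('k::field poly fract \<Rightarrow> 'l::field) \<Rightarrow> ('b::finite \<Rightarrow> 'l) \<Rightarrow> 'l \<Rightarrow> 'b \<Rightarrow> 'k poly fract" where
  "coordK \<iota> f x = (THE c. x = (\<Sum>b\<in>UNIV. \<iota> (c b) * f b))"

text \<open>Matrix power and entrywise q^i-th power (twisting by tau^i).\<close>
definition matpow :: "'a::semiring_1^'n^'n \<Rightarrow> nat \<Rightarrow> 'a^'n^'n" where
  "matpow M n = (((**) M) ^^ n) (mat 1)"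

definition frobM :: "'k::finite itself \<Rightarrow> nat \<Rightarrow> 'l::field^'d^'d \<Rightarrow> 'l^'d^'d" where
  "frobM _ i M = (\<chi> r s. (M $ r $ s) ^ (CARD('k) ^ i))"

text \<open>Anderson t-module E : A -> M_d(O_L){tau}, with E a i = E_{a,i}.\<close>
definition is_t_module :: "('k::{finite,field} poly fract \<Rightarrow> 'l::field) \<Rightarrow>
    ('k poly \<Rightarrow> nat \<Rightarrow> 'l^'d::finite^'d) \<Rightarrow> bool" where
  "is_t_module \<iota> E \<longleftrightarrow>
     (\<forall>a. \<exists>N. \<forall>i>N. E a i = 0) \<and>
     (\<forall>a i r s. E a i $ r $ s \<in> OL \<iota>) \<and>
     (\<forall>c. E [:c:] 0 = mat (embA \<iota> [:c:]) \<and> (\<forall>i>0. E [:c:] i = 0)) \<and>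
     (\<forall>a b i. E (a + b) i = E a i + E b i) \<and>
     (\<forall>a b n. E (a * b) n = (\<Sum>i\<le>n. E a i ** frobM TYPE('k) i (E b (n - i)))) \<and>
     (\<forall>a. matpow (E a 0 - mat (embA \<iota> a)) CARD('d) = 0) \<and>
     (\<exists>i>0. E [:0, 1:] i \<noteq> 0)"

text \<open>log_E = sum l_n tau^n: l_0 = I and log_E E_a = E_{a,0} log_E for all a.\<close>
definition logE :: "('k::{finite,field} poly \<Rightarrow> nat \<Rightarrow> 'l::field^'d::finite^'d) \<Rightarrow> nat \<Rightarrow> 'l^'d^'d" where
  "logE E = (THE l. l 0 = mat 1 \<and>
     (\<forall>a n. (\<Sum>i\<le>n. l i ** frobM TYPE('k) i (E a (n - i))) = E a 0 ** l n))"

text \<open>K_P: a completion of K for the P-adic valuation v_P; j : K -> K_P, w the valuation on K_P.\<close>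
definition is_P_adic_completion :: "'k::field_gcd poly \<Rightarrow> ('k poly fract \<Rightarrow> 'kp::field) \<Rightarrow> ('kp \<Rightarrow> ereal) \<Rightarrow> bool" where
  "is_P_adic_completion P j w \<longleftrightarrow> is_ring_hom j \<and>
     (\<forall>x. w x = \<infinity> \<longleftrightarrow> x = 0) \<and>
     (\<forall>x. x \<noteq> 0 \<longrightarrow> (\<exists>n::int. w x = ereal (real_of_int n))) \<and>
     (\<forall>x y. w (x * y) = w x + w y) \<and>
     (\<forall>x y. min (w x) (w y) \<le> w (x + y)) \<and>
     (\<forall>a b. a \<noteq> 0 \<and> b \<noteq> 0 \<longrightarrow>
        w (j (Fract a b)) = ereal (real_of_int (int (multiplicity P a) - int (multiplicity P b)))) \<and>
     (\<forall>s :: nat \<Rightarrow> 'kp. (\<forall>M::real. \<exists>N. \<forall>m\<ge>N. \<forall>n\<ge>N. ereal M \<le> w (s m - s n)) \<longrightarrow>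
        (\<exists>x. \<forall>M::real. \<exists>N. \<forall>n\<ge>N. ereal M \<le> w (s n - x))) \<and>
     (\<forall>x (M::real). \<exists>c. ereal M \<le> w (x - j c))"

text \<open>Elements of T_z(L_P)^d are represented as Y :: 'd => 'b => nat => 'kp:
  Y r b m is the coefficient of z^m of the f_b-coordinate of the r-th component.\<close>

definition is_tate :: "('kp \<Rightarrow> ereal) \<Rightarrow> ('d \<Rightarrow> 'b \<Rightarrow> nat \<Rightarrow> 'kp) \<Rightarrow> bool" where
  "is_tate w Y \<longleftrightarrow> (\<forall>r b. \<forall>M::real. \<exists>N. \<forall>m\<ge>N. ereal M \<le> w (Y r b m))"

definition vP :: "('kp \<Rightarrow> ereal) \<Rightarrow> ('d \<Rightarrow> 'b \<Rightarrow> nat \<Rightarrow> 'kp) \<Rightarrow> ereal" where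
  "vP w Y = (INF x\<in>UNIV. w (Y (fst x) (fst (snd x)) (snd (snd x))))"

definition Omega_plus :: "('kp \<Rightarrow> ereal) \<Rightarrow> ('d \<Rightarrow> 'b \<Rightarrow> nat \<Rightarrow> 'kp) set" where
  "Omega_plus w = {Y. is_tate w Y \<and> vP w Y > 0}"

text \<open>tau on T_z(L_P) = L (x) T_z(K_P): tau(f_i (x) y) = f_i^q (x) y^(q), coefficientwise on z.\<close>
definition tauLP :: "'k::{finite,field} itself \<Rightarrow> ('k poly fract \<Rightarrow> 'l::field) \<Rightarrow> ('k poly fract \<Rightarrow> 'kp::field) \<Rightarrow>
    ('b::finite \<Rightarrow> 'l) \<Rightarrow> ('d \<Rightarrow> 'b \<Rightarrow> nat \<Rightarrow> 'kp) \<Rightarrow> ('d \<Rightarrow> 'b \<Rightarrow> nat \<Rightarrow> 'kp)" where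
  "tauLP _ \<iota> j f Y = (\<lambda>r k m. \<Sum>i\<in>UNIV. j (coordK \<iota> f (f i ^ CARD('k)) k) * (Y r i m) ^ CARD('k))"

definition matLP :: "('k::field poly fract \<Rightarrow> 'l::field) \<Rightarrow> ('k poly fract \<Rightarrow> 'kp::field) \<Rightarrow>
    ('b::finite \<Rightarrow> 'l) \<Rightarrow> 'l^'d::finite^'d \<Rightarrow> ('d \<Rightarrow> 'b \<Rightarrow> nat \<Rightarrow> 'kp) \<Rightarrow> ('d \<Rightarrow> 'b \<Rightarrow> nat \<Rightarrow> 'kp)" where
  "matLP \<iota> j f M Y = (\<lambda>r k m. \<Sum>s\<in>UNIV. \<Sum>i\<in>UNIV. j (coordK \<iota> f (M $ r $ s * f i) k) * Y s i m)"

text \<open>log_{E~,P}(Y) = sum_n l_n z^n tau^n(Y); the coefficient of z^m only involves n \<le> m.\<close>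
definition logEP :: "('k::{finite,field} poly fract \<Rightarrow> 'l::field) \<Rightarrow> ('k poly fract \<Rightarrow> 'kp::field) \<Rightarrow>
    ('b::finite \<Rightarrow> 'l) \<Rightarrow> ('k poly \<Rightarrow> nat \<Rightarrow> 'l^'d::finite^'d) \<Rightarrow>
    ('d \<Rightarrow> 'b \<Rightarrow> nat \<Rightarrow> 'kp) \<Rightarrow> ('d \<Rightarrow> 'b \<Rightarrow> nat \<Rightarrow> 'kp)" where
  "logEP \<iota> j f E Y = (\<lambda>r k m. \<Sum>n\<le>m.
      matLP \<iota> j f (logE E n) ((tauLP TYPE('k) \<iota> j f ^^ n) Y) r k (m - n))"

end

theory Submission
  imports Defs "HOL-Computational_Algebra.Primes"
begin


lemma ff_pow_card: "(x::'k::{finite,field}) ^ CARD('k) = x"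
proof (cases "x = 0")
  case False
  have "x * (\<Prod>y\<in>UNIV-{0}. x * y) = x * x ^ (card (UNIV :: 'k set) - 1) * \<Prod>(UNIV-{0})"
    by (simp add: prod.distrib mult_ac)
  also have "x * x ^ (card (UNIV :: 'k set) - 1) = x ^ Suc (card (UNIV :: 'k set) - 1)"
    by (subst power_Suc) auto
  also have "Suc (card (UNIV :: 'k set) - 1) = card (UNIV :: 'k set)"
    using finite_UNIV_card_ge_0[where ?'a = 'k] by simp
  also have "(\<Prod>y\<in>UNIV-{0}. x * y) = (\<Prod>y\<in>UNIV-{0}. y)"
    by (rule prod.reindex_bij_witness[of _ "\<lambda>y. y / x" "\<lambda>y. x * y"]) (use False in auto)
  finally show ?thesis
    by simp
qed (use finite_UNIV_card_ge_0[where ?'a = 'k] in auto)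

lemma ff_binom_zero:
  assumes "0 < i" "i < CARD('k::{finite,field})"
  shows "of_nat (CARD('k) choose i) = (0::'k)"
proof -
  define q where "q = CARD('k)"
  have q1: "q \<ge> 1" unfolding q_def using finite_UNIV_card_ge_0[where ?'a = 'k] by simp
  define g :: "'k poly" where "g = [:1,1:]^q - monom 1 q - 1"
  have roots: "poly g x = 0" for x
    using ff_pow_card[of "1+x"] ff_pow_card[of x] by (simp add: g_def q_def poly_monom)
  have cg: "coeff g i = (if i = q then 0 else if i = 0 then 0 else if i < q then of_nat (q choose i) else 0)" for i
  proof -
    have "coeff ([:1,1:]^q :: 'k poly) i = (if i \<le> q then of_nat (q choose i) else 0)"
    proof (cases "i \<le> q")
      case True then show ?thesis by (simp add: coeff_linear_poly_power)
    next
      case False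
      have "degree ([:1,1:]^q :: 'k poly) \<le> q"
        using degree_power_le[of "[:1,1:]::'k poly" q] by simp
      then show ?thesis using False by (simp add: coeff_eq_0)
    qed
    then show ?thesis using q1 by (auto simp: g_def coeff_monom)
  qed
  have "g = 0"
  proof (rule ccontr)
    assume ng: "g \<noteq> 0"
    have "degree g < q"
    proof -
      have "\<forall>i>q - 1. coeff g i = 0" using cg by auto
      hence "degree g \<le> q - 1" by (simp add: degree_le)
      thus ?thesis using q1 by simp
    qed
    moreover have "card {x. poly g x = 0} \<le> degree g" by (rule card_poly_roots_bound[OF ng])
    moreover have "{x. poly g x = 0} = UNIV" using roots by auto
    ultimately show False by (simp add: q_def)
  qed
  hence "coeff g i = 0" by simp
  thus ?thesis using cg[of i] assms by (simp add: q_def)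
qed


lemma ring_hom_of_nat: "is_ring_hom \<iota> \<Longrightarrow> \<iota> (of_nat n) = of_nat n"
  by (induction n) (auto simp: is_ring_hom_def)

lemma frob_L_add:
  fixes \<iota> :: "'k::{finite,field} poly fract \<Rightarrow> 'l::field"
    and x y :: 'l
  assumes hom: "is_ring_hom \<iota>"
  shows "(x + y) ^ CARD('k) = x ^ CARD('k) + y ^ CARD('k)"
proof -
  define q where "q = CARD('k)"
  have q1: "q \<ge> 1" unfolding q_def using finite_UNIV_card_ge_0[where ?'a = 'k] by simp
  have z: "of_nat (q choose i) = (0::'l)" if "0 < i" "i < q" for i
  proof -
    have "of_nat (q choose i) = (0::'k)" using ff_binom_zero[of i, where 'k='k] that by (simp add: q_def)
    hence "of_nat (q choose i) = (0::'k poly)" by (simp add: of_nat_poly)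
    hence "of_nat (q choose i) = (0::'k poly fract)"
      by (metis of_nat_fract Zero_fract_def)
    hence "\<iota> (of_nat (q choose i)) = 0" using hom by (simp add: is_ring_hom_def)
    thus ?thesis using ring_hom_of_nat[OF hom] by metis
  qed
  have "(x + y) ^ q = (\<Sum>k\<le>q. of_nat (q choose k) * x ^ k * y ^ (q - k))"
    by (rule binomial_ring)
  also have "\<dots> = (\<Sum>k\<in>{0,q}. of_nat (q choose k) * x ^ k * y ^ (q - k))"
    by (intro sum.mono_neutral_right) (use z in auto)
  also have "\<dots> = x ^ q + y ^ q" using q1 by (simp add: add_ac)
  finally show ?thesis by (simp add: q_def)
qed

definition sp :: "'k::finite itself \<Rightarrow> (nat \<Rightarrow> 'l::field^'d::finite^'d) \<Rightarrow> (nat \<Rightarrow> 'l^'d^'d) \<Rightarrow> nat \<Rightarrow> 'l^'d^'d" where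
  "sp t A B n = (\<Sum>i\<le>n. A i ** frobM t i (B (n - i)))"

definition cst :: "'a::zero \<Rightarrow> nat \<Rightarrow> 'a" where
  "cst X n = (if n = 0 then X else 0)"

lemma msum_left: "(\<Sum>a\<in>S. X a) ** (Y::'a::semiring_1^'n::finite^'m::finite) = (\<Sum>a\<in>S. X a ** Y)"
  by (induction S rule: infinite_finite_induct)
     (auto simp: matrix_matrix_mult_def vec_eq_iff sum_distrib_right sum.distrib algebra_simps)

lemma msum_right: "(Y::'a::semiring_1^'n::finite^'m::finite) ** (\<Sum>a\<in>S. X a) = (\<Sum>a\<in>S. Y ** X a)"
  by (induction S rule: infinite_finite_induct) (auto simp: matrix_add_ldistrib)

lemma matrix_add_rdistrib': "((A::'a::semiring_1^'n::finite^'m::finite) + B) ** C = A ** C + B ** C"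
  by (auto simp: matrix_matrix_mult_def vec_eq_iff sum.distrib algebra_simps)

lemma matrix_diff_rdistrib': "((A::'a::ring_1^'n::finite^'m::finite) - B) ** C = A ** C - B ** C"
  by (auto simp: matrix_matrix_mult_def vec_eq_iff sum_subtractf algebra_simps)

lemma matrix_diff_ldistrib': "(C::'a::ring_1^'n::finite^'m::finite) ** (A - B) = C ** A - C ** B"
  by (auto simp: matrix_matrix_mult_def vec_eq_iff sum_subtractf algebra_simps)

lemma frobM_0idx: "frobM t 0 M = M"
  by (simp add: frobM_def vec_eq_iff)

lemma frobM_comp: "frobM (t::'k::finite itself) i (frobM t j M) = frobM t (i + j) M"
  by (simp add: frobM_def vec_eq_iff power_add power_mult[symmetric] mult.commute)

context
  fixes tk :: "'k::{finite,field} itself"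
  assumes Fadd: "\<And>x y :: 'l::field. (x + y) ^ CARD('k) = x ^ CARD('k) + y ^ CARD('k)"
begin

lemma card_pos: "CARD('k) > 0"
  using finite_UNIV_card_ge_0[where ?'a = 'k] by simp

lemma powQ_add: "((x::'l) + y) ^ (CARD('k) ^ i) = x ^ (CARD('k) ^ i) + y ^ (CARD('k) ^ i)"
  by (induction i arbitrary: x y) (simp_all add: power_mult Fadd)

lemma powQ_sum: "(\<Sum>a\<in>S. (f a::'l)) ^ (CARD('k) ^ i) = (\<Sum>a\<in>S. f a ^ (CARD('k) ^ i))"
  using card_pos by (induction S rule: infinite_finite_induct) (simp_all add: powQ_add)

lemma powQ_diff: "((x::'l) - y) ^ (CARD('k) ^ i) = x ^ (CARD('k) ^ i) - y ^ (CARD('k) ^ i)"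
  using powQ_add[of "x - y" y i] by (simp add: algebra_simps)

lemma frobM_add: "frobM TYPE('k) i (A + B) = frobM TYPE('k) i A + frobM TYPE('k) i (B :: 'l^'d::finite^'d)"
  by (simp add: frobM_def vec_eq_iff powQ_add)

lemma frobM_diff: "frobM TYPE('k) i (A - B) = frobM TYPE('k) i A - frobM TYPE('k) i (B :: 'l^'d::finite^'d)"
  by (simp add: frobM_def vec_eq_iff powQ_diff)

lemma frobM_zero: "frobM TYPE('k) i (0 :: 'l^'d::finite^'d) = 0"
  using card_pos by (simp add: frobM_def vec_eq_iff)

lemma frobM_mult: "frobM TYPE('k) i (A ** B) = frobM TYPE('k) i A ** frobM TYPE('k) i (B :: 'l^'d::finite^'d)"
  by (simp add: frobM_def vec_eq_iff matrix_matrix_mult_def powQ_sum power_mult_distrib)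

lemma frobM_sum: "frobM TYPE('k) i (\<Sum>a\<in>S. X a) = (\<Sum>a\<in>S. frobM TYPE('k) i (X a :: 'l^'d::finite^'d))"
  by (induction S rule: infinite_finite_induct) (simp_all add: frobM_zero frobM_add)

lemma frobM_mat: "frobM TYPE('k) i (mat c :: 'l^'d::finite^'d) = mat (c ^ (CARD('k) ^ i))"
  using card_pos by (simp add: frobM_def vec_eq_iff mat_def)

end



lemma matpow_0[simp]: "matpow M 0 = mat 1" by (simp add: matpow_def)
lemma matpow_Suc: "matpow M (Suc n) = M ** matpow M n" by (simp add: matpow_def)
lemma matpow_Suc_right: "matpow (M::'a::semiring_1^'n::finite^'n) (Suc n) = matpow M n ** M"
  by (induction n) (simp_all add: matpow_Suc matrix_mul_assoc)

lemma mat_mult_left: "mat a ** (X::'a::semiring_1^'n::finite^'m::finite) = (\<chi> i j. a * X$i$j)"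
  by (simp add: matrix_matrix_mult_def mat_def vec_eq_iff if_distrib if_distribR sum.delta' cong: if_cong)

lemma mat_mult_right: "(X::'a::comm_semiring_1^'n::finite^'m::finite) ** mat a = mat a ** X"
  by (simp add: mat_mult_left) (simp add: matrix_matrix_mult_def mat_def vec_eq_iff if_distrib if_distribR sum.delta' mult.commute cong: if_cong)

lemma mat_mat: "mat a ** (mat b ** (X::'a::semiring_1^'n::finite^'m::finite)) = mat (a * b) ** X"
  by (simp add: mat_mult_left vec_eq_iff mult.assoc)

lemma mat_comm: "(Y::'a::comm_semiring_1^'n::finite^'m::finite) ** (mat a ** X) = mat a ** (Y ** X)"
  by (metis mat_mult_right matrix_mul_assoc)

lemma mat_add: "mat (a + b) = (mat a + mat b :: 'a::semiring_1^'n::finite^'n)"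
  by (simp add: mat_def vec_eq_iff)

lemma mat_diff: "mat (a - b) = (mat a - mat b :: 'a::ring_1^'n::finite^'n)"
  by (simp add: mat_def vec_eq_iff)

lemma mat_1_mult: "mat 1 ** X = X" by simp

lemma matrix_neg_right: "(A::'a::ring_1^'n::finite^'m::finite) ** (- B) = - (A ** B)"
  using matrix_diff_ldistrib'[of A 0 B] by simp

lemma matrix_neg_left: "(- A::'a::ring_1^'n::finite^'m::finite) ** B = - (A ** B)"
  using matrix_diff_rdistrib'[of 0 A B] by simp

context
  fixes N :: "'a::field^'n::finite^'n" and c :: 'a
  assumes nil: "matpow N CARD('n) = 0" and c0: "c \<noteq> 0"
begin

definition Ginv where "Ginv = (\<Sum>k<CARD('n). mat (1 / c ^ Suc k) ** matpow N k)"

lemma M0_Ginv: "(mat c - N) ** Ginv = mat 1"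
proof -
  define f where "f k = mat (1 / c ^ k) ** matpow N k" for k
  have "(mat c - N) ** Ginv = (\<Sum>k<CARD('n). f k - f (Suc k))"
    unfolding Ginv_def msum_right
  proof (rule sum.cong[OF refl])
    fix k
    have "(mat c - N) ** (mat (1 / c ^ Suc k) ** matpow N k)
        = mat c ** (mat (1 / c ^ Suc k) ** matpow N k) - N ** (mat (1 / c ^ Suc k) ** matpow N k)"
      by (simp add: matrix_diff_rdistrib')
    also have "\<dots> = f k - f (Suc k)"
    proof -
      have a: "mat c ** (mat (1 / c ^ Suc k) ** matpow N k) = f k"
        unfolding mat_mat f_def using c0 by simp
      have b: "N ** (mat (1 / c ^ Suc k) ** matpow N k) = mat (1 / c ^ Suc k) ** (N ** matpow N k)"
        by (rule mat_comm)
      show ?thesis unfolding a b f_def matpow_Suc by simp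
    qed
    finally show "(mat c - N) ** (mat (1 / c ^ Suc k) ** matpow N k) = f k - f (Suc k)" .
  qed
  also have "\<dots> = f 0 - f CARD('n)" by (rule sum_lessThan_telescope')
  also have "\<dots> = mat 1" by (simp add: f_def nil)
  finally show ?thesis .
qed

lemma Ginv_M0: "Ginv ** (mat c - N) = mat 1"
proof -
  define f where "f k = mat (1 / c ^ k) ** matpow N k" for k
  have "Ginv ** (mat c - N) = (\<Sum>k<CARD('n). f k - f (Suc k))"
    unfolding Ginv_def msum_left
  proof (rule sum.cong[OF refl])
    fix k
    have "(mat (1 / c ^ Suc k) ** matpow N k) ** (mat c - N)
        = (mat (1 / c ^ Suc k) ** matpow N k) ** mat c - (mat (1 / c ^ Suc k) ** matpow N k) ** N"
      by (simp add: matrix_diff_ldistrib')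
    also have "\<dots> = f k - f (Suc k)"
    proof -
      have a: "(mat (1 / c ^ Suc k) ** matpow N k) ** mat c = f k"
        unfolding mat_mult_right[of _ c] mat_mat f_def using c0 by simp
      have b: "(mat (1 / c ^ Suc k) ** matpow N k) ** N = mat (1 / c ^ Suc k) ** (matpow N k ** N)"
        by (rule matrix_mul_assoc[symmetric])
      show ?thesis unfolding a b f_def matpow_Suc_right by simp
    qed
    finally show "(mat (1 / c ^ Suc k) ** matpow N k) ** (mat c - N) = f k - f (Suc k)" .
  qed
  also have "\<dots> = f 0 - f CARD('n)" by (rule sum_lessThan_telescope')
  also have "\<dots> = mat 1" by (simp add: f_def nil)
  finally show ?thesis .
qed

end


lemma syl_form:
  fixes X N N' :: "'a::field^'n::finite^'n"
  shows "X ** (mat t' + N') - (mat t + N) ** X = (mat (t' - t) - N) ** X + X ** N'"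
proof -
  have "X ** (mat t' + N') = mat t' ** X + X ** N'"
    by (simp only: matrix_add_ldistrib mat_mult_right)
  moreover have "(mat t + N) ** X = mat t ** X + N ** X"
    by (simp only: matrix_add_rdistrib')
  moreover have "(mat (t' - t) - N) ** X = mat t' ** X - mat t ** X - N ** X"
    by (simp only: mat_diff matrix_diff_rdistrib')
  ultimately show ?thesis by (simp add: algebra_simps)
qed

lemma syl_unique:
  fixes X N N' :: "'a::field^'n::finite^'n"
  assumes nil: "matpow N CARD('n) = 0" and nil': "matpow N' CARD('n) = 0" and ne: "t' \<noteq> t"
    and eq: "X ** (mat t' + N') = (mat t + N) ** X"
  shows "X = 0"
proof -
  define c where "c = t' - t"
  have c0: "c \<noteq> 0" using ne by (simp add: c_def)
  define G where "G = Ginv N c"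
  have e1: "(mat c - N) ** X = - (X ** N')"
    using syl_form[of X t' N' t N] eq by (simp add: c_def eq_neg_iff_add_eq_0)
  have e2: "X = - (G ** X ** N')"
  proof -
    have "X = (G ** (mat c - N)) ** X" using Ginv_M0[OF nil c0] by (simp add: G_def)
    also have "\<dots> = G ** ((mat c - N) ** X)" by (simp add: matrix_mul_assoc)
    also have "\<dots> = - (G ** X ** N')" using e1
      by (simp add: matrix_neg_right matrix_mul_assoc)
    finally show ?thesis .
  qed
  define Z where "Z k = matpow G k ** X ** matpow N' k" for k
  have Zs: "Z k = - Z (Suc k)" for k
  proof -
    have "Z k = matpow G k ** (- (G ** X ** N')) ** matpow N' k"
      unfolding Z_def by (subst e2) (rule refl)
    also have "\<dots> = - (matpow G k ** (G ** X ** N') ** matpow N' k)"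
      by (simp add: matrix_neg_right matrix_neg_left)
    also have "matpow G k ** (G ** X ** N') ** matpow N' k = Z (Suc k)"
      unfolding Z_def by (simp add: matpow_Suc_right[of G] matpow_Suc[of N'] matrix_mul_assoc)
    finally show ?thesis .
  qed
  have "Z (CARD('n) - i) = 0" if "i \<le> CARD('n)" for i
    using that
  proof (induction i)
    case 0 then show ?case by (simp add: Z_def nil')
  next
    case (Suc i)
    then have "Z (CARD('n) - i) = 0" by simp
    moreover have "CARD('n) - i = Suc (CARD('n) - Suc i)" using Suc.prems by simp
    ultimately show ?case using Zs[of "CARD('n) - Suc i"] by simp
  qed
  from this[of "CARD('n)"] have "Z 0 = 0" by simp
  moreover have "Z 0 = X" unfolding Z_def matpow_0 by simp
  ultimately show ?thesis by simp
qed

lemma syl_exists: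
  fixes R N N' :: "'a::field^'n::finite^'n"
  assumes nil: "matpow N CARD('n) = 0" and nil': "matpow N' CARD('n) = 0" and ne: "t' \<noteq> t"
  shows "\<exists>X. X ** (mat t' + N') - (mat t + N) ** X = R"
proof -
  define c where "c = t' - t"
  have c0: "c \<noteq> 0" using ne by (simp add: c_def)
  define G where "G = Ginv N c"
  define W where "W = rec_nat (G ** R) (\<lambda>k Wk. - (G ** Wk ** N'))"
  have W0: "W 0 = G ** R" and WS: "W (Suc k) = - (G ** W k ** N')" for k by (simp_all add: W_def)
  have "\<exists>S. W k = S ** matpow N' k" for k
  proof (induction k)
    case 0 then show ?case by (intro exI[of _ "G ** R"]) (simp add: W0)
  next
    case (Suc k)
    then obtain S where S: "W k = S ** matpow N' k" by blast
    have "W (Suc k) = (- (G ** S)) ** matpow N' (Suc k)"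
      by (simp add: WS S matpow_Suc_right matrix_mul_assoc matrix_neg_left)
    then show ?case by blast
  qed
  then obtain Sd where "W CARD('n) = Sd ** matpow N' CARD('n)" by blast
  then have Wd: "W CARD('n) = 0" using nil' by simp
  define X where "X = (\<Sum>k<CARD('n). W k)"
  have "X + G ** X ** N' = (\<Sum>k<CARD('n). W k - W (Suc k))"
  proof -
    have "G ** X ** N' = (\<Sum>k<CARD('n). G ** W k ** N')"
      by (simp add: X_def msum_right msum_left)
    also have "\<dots> = (\<Sum>k<CARD('n). - W (Suc k))" by (simp add: WS)
    finally show ?thesis by (simp add: X_def sum_subtractf sum_negf)
  qed
  also have "\<dots> = G ** R" by (simp add: sum_lessThan_telescope' W0 Wd)
  finally have XG: "X + G ** X ** N' = G ** R" .
  have "X ** (mat t' + N') - (mat t + N) ** X = (mat c - N) ** X + X ** N'"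
    using syl_form by (simp add: c_def)
  also have "\<dots> = (mat c - N) ** (X + G ** X ** N')"
    using M0_Ginv[OF nil c0] by (simp add: matrix_add_ldistrib matrix_mul_assoc G_def)
  also have "\<dots> = (mat c - N) ** (G ** R)" by (simp only: XG)
  also have "\<dots> = ((mat c - N) ** G) ** R" by (rule matrix_mul_assoc)
  also have "\<dots> = R" using M0_Ginv[OF nil c0] unfolding G_def by simp
  finally show ?thesis by blast
qed



lemma tri_sum: "(\<Sum>k\<le>n. \<Sum>m\<le>n-k. h k m) = (\<Sum>i\<le>(n::nat). \<Sum>k\<le>i. (h k (i-k) :: 'a::comm_monoid_add))"
proof -
  have S: "{(i,j). i+j \<le> n} = Sigma {..n} (\<lambda>i. {..n-i})" by auto
  have "(\<Sum>k\<le>n. \<Sum>m\<le>n-k. h k m) = (\<Sum>(i,j)\<in>{(i,j). i+j \<le> n}. h i j)"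
    unfolding S by (simp add: sum.Sigma)
  also have "\<dots> = (\<Sum>i\<le>n. \<Sum>k\<le>i. h k (i-k))" by (rule sum.triangle_reindex_eq)
  finally show ?thesis .
qed

lemma sp_cst_left: "sp t (cst X) B n = X ** B n"
proof -
  have "sp t (cst X) B n = (\<Sum>i\<in>{0}. cst X i ** frobM t i (B (n - i)))"
    unfolding sp_def by (intro sum.mono_neutral_right) (auto simp: cst_def)
  thus ?thesis by (simp add: cst_def frobM_0idx)
qed

lemma sp_diff_left: "sp t (A - A') B n = sp t A B n - sp t A' B n"
  by (simp add: sp_def matrix_diff_rdistrib' sum_subtractf)

context
  fixes tk :: "'k::{finite,field} itself"
  assumes Fadd: "\<And>x y :: 'l::field. (x + y) ^ CARD('k) = x ^ CARD('k) + y ^ CARD('k)"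
begin

lemma sp_cst_right: "sp TYPE('k) A (cst X) n = A n ** frobM TYPE('k) n (X :: 'l^'d::finite^'d)"
proof -
  have "sp TYPE('k) A (cst X) n = (\<Sum>i\<in>{n}. A i ** frobM TYPE('k) i (cst X (n - i)))"
    unfolding sp_def by (intro sum.mono_neutral_right) (auto simp: cst_def frobM_zero[OF Fadd])
  thus ?thesis by (simp add: cst_def)
qed

lemma sp_diff_right: "sp TYPE('k) A (B - B') n = sp TYPE('k) A B n - sp TYPE('k) A B' (n :: nat)"
  for B B' :: "nat \<Rightarrow> 'l^'d::finite^'d"
  by (simp add: sp_def matrix_diff_ldistrib' sum_subtractf frobM_diff[OF Fadd])

lemma sp_assoc: "sp TYPE('k) (sp TYPE('k) A B) C n = sp TYPE('k) A (sp TYPE('k) B C) n"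
  for A B C :: "nat \<Rightarrow> 'l^'d::finite^'d"
proof -
  define F :: "nat \<Rightarrow> 'l^'d^'d \<Rightarrow> 'l^'d^'d" where "F = frobM TYPE('k)"
  define h where "h k m = A k ** F k (B m) ** F (k + m) (C (n - k - m))" for k m
  have "sp TYPE('k) A (sp TYPE('k) B C) n = (\<Sum>k\<le>n. \<Sum>m\<le>n-k. h k m)"
    unfolding sp_def
  proof (rule sum.cong[OF refl])
    fix k assume "k \<in> {..n}"
    have "A k ** frobM TYPE('k) k (\<Sum>m\<le>n - k. B m ** frobM TYPE('k) m (C (n - k - m)))
        = (\<Sum>m\<le>n - k. A k ** (F k (B m) ** F (k + m) (C (n - k - m))))"
      by (simp add: frobM_sum[OF Fadd] frobM_mult[OF Fadd] frobM_comp msum_right F_def add.commute)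
    also have "\<dots> = (\<Sum>m\<le>n-k. h k m)" by (simp add: h_def matrix_mul_assoc)
    finally show "A k ** frobM TYPE('k) k (\<Sum>m\<le>n - k. B m ** frobM TYPE('k) m (C (n - k - m)))
        = (\<Sum>m\<le>n-k. h k m)" .
  qed
  also have "\<dots> = (\<Sum>i\<le>n. \<Sum>k\<le>i. h k (i-k))" by (rule tri_sum)
  also have "\<dots> = sp TYPE('k) (sp TYPE('k) A B) C n"
    unfolding sp_def
  proof (rule sum.cong[OF refl])
    fix i assume i: "i \<in> {..n}"
    show "(\<Sum>k\<le>i. h k (i-k)) = (\<Sum>k\<le>i. A k ** frobM TYPE('k) k (B (i - k))) ** frobM TYPE('k) i (C (n - i))"
      unfolding msum_left
    proof (rule sum.cong[OF refl])
      fix k assume "k \<in> {..i}"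
      then have "k + (i - k) = i" "n - k - (i - k) = n - i" using i by auto
      then show "h k (i - k) = A k ** frobM TYPE('k) k (B (i - k)) ** frobM TYPE('k) i (C (n - i))"
        by (simp add: h_def F_def)
    qed
  qed
  finally show ?thesis by simp
qed

end



lemma ring_hom_pow: "is_ring_hom \<iota> \<Longrightarrow> \<iota> (x ^ m) = \<iota> x ^ m"
  by (induction m) (auto simp: is_ring_hom_def)

lemma ring_hom_diff: "is_ring_hom \<iota> \<Longrightarrow> \<iota> (x - y) = \<iota> x - \<iota> (y::'a::ring_1) "
proof -
  assume h: "is_ring_hom \<iota>"
  have "\<iota> ((x - y) + y) = \<iota> (x - y) + \<iota> y" using h unfolding is_ring_hom_def by blast
  thus ?thesis by (simp add: algebra_simps)
qed

lemma ring_hom_inj: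
  fixes \<iota> :: "'a::field \<Rightarrow> 'b::field"
  assumes "is_ring_hom \<iota>" "\<iota> x = \<iota> y" shows "x = y"
proof (rule ccontr)
  assume "x \<noteq> y"
  then have "\<iota> ((x - y) * inverse (x - y)) = 1" using assms(1) by (simp add: is_ring_hom_def)
  moreover have "\<iota> (x - y) = 0" using ring_hom_diff[OF assms(1)] assms(2) by simp
  ultimately show False using assms(1) by (simp add: is_ring_hom_def)
qed

lemma Fract_pow: "Fract (a::'a::idom) 1 ^ m = Fract (a ^ m) 1"
  by (induction m) (simp_all add: One_fract_def)

lemma card_ge2: "CARD('k::{finite,field}) \<ge> 2"
proof -
  have "card {0::'k, 1} \<le> CARD('k)" by (rule card_mono) auto
  thus ?thesis by simp
qed

lemma theta_pow_ne:
  fixes \<iota> :: "'k::{finite,field} poly fract \<Rightarrow> 'l::field"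
  assumes hom: "is_ring_hom \<iota>" and n: "n > 0"
  shows "embA \<iota> [:0,1:] ^ (CARD('k) ^ n) \<noteq> embA \<iota> [:0,1:]"
proof
  define Q where "Q = CARD('k) ^ n"
  have Q2: "Q \<ge> 2"
  proof -
    have "CARD('k) ^ 1 \<le> CARD('k) ^ n" using n card_ge2[where 'k='k] by (intro power_increasing) auto
    thus ?thesis using card_ge2[where 'k='k] by (simp add: Q_def)
  qed
  assume "embA \<iota> [:0,1:] ^ (CARD('k) ^ n) = embA \<iota> [:0,1:]"
  then have "\<iota> (Fract ([:0,1:] ^ Q) 1) = \<iota> (Fract [:0,1:] 1)"
    by (simp add: embA_def Q_def ring_hom_pow[OF hom, symmetric] Fract_pow)
  then have "Fract ([:0,1:] ^ Q) 1 = Fract ([:0,1:] :: 'k poly) 1" by (rule ring_hom_inj[OF hom])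
  then have "[:0,1:] ^ Q = ([:0,1:] :: 'k poly)" by (simp add: eq_fract)
  then have "degree ([:0,1:] ^ Q :: 'k poly) = 1" by simp
  moreover have "degree ([:0,1:] ^ Q :: 'k poly) = Q" by (subst degree_power_eq) auto
  ultimately show False using Q2 by simp
qed

lemma frobM_1: "frobM t i (mat 1 :: 'l::field^'d::finite^'d) = mat 1"
  by (simp add: frobM_def mat_def vec_eq_iff)

context
  fixes tk :: "'k::{finite,field} itself"
  assumes Fadd: "\<And>x y :: 'l::field. (x + y) ^ CARD('k) = x ^ CARD('k) + y ^ CARD('k)"
begin
lemma frobM_matpow: "frobM TYPE('k) i (matpow M m) = matpow (frobM TYPE('k) i M) m" for M :: "'l^'d::finite^'d"
  by (induction m) (simp_all add: matpow_Suc frobM_mult[OF Fadd] frobM_1)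
end


context
  fixes \<iota> :: "'k::{finite,field} poly fract \<Rightarrow> 'l::field"
    and E :: "'k poly \<Rightarrow> nat \<Rightarrow> 'l^'d::finite^'d"
  assumes hom: "is_ring_hom \<iota>" and tm: "is_t_module \<iota> E"
begin

lemma Fadd: "(x + y :: 'l) ^ CARD('k) = x ^ CARD('k) + y ^ CARD('k)"
  by (rule frob_L_add[OF hom])

lemma tm_mult: "E (a * b) n = sp TYPE('k) (E a) (E b) n"
  using tm unfolding is_t_module_def sp_def by blast

lemma tm_nil: "matpow (E a 0 - mat (embA \<iota> a)) CARD('d) = 0"
  using tm unfolding is_t_module_def by blast

lemma sp_0: "sp t A B 0 = A 0 ** B 0"
  by (simp add: sp_def frobM_0idx)

abbreviation "Et \<equiv> E [:0,1:]"
abbreviation "Dt \<equiv> E [:0,1:] 0"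
abbreviation "tL \<equiv> embA \<iota> [:0,1:]"
abbreviation "Nt \<equiv> E [:0,1:] 0 - mat (embA \<iota> [:0,1:])"

lemma Dt_eq: "Dt = mat tL + Nt" by simp

lemma frob_Dt: "frobM TYPE('k) n Dt = mat (tL ^ (CARD('k) ^ n)) + frobM TYPE('k) n Nt"
  by (subst Dt_eq) (simp only: frobM_add[OF Fadd] frobM_mat[OF Fadd])

lemma nil_frob: "matpow (frobM TYPE('k) n Nt) CARD('d) = 0"
proof -
  have "matpow (frobM TYPE('k) n Nt) CARD('d) = frobM TYPE('k) n (matpow Nt CARD('d))"
    by (rule frobM_matpow[OF Fadd, symmetric])
  also have "\<dots> = frobM TYPE('k) n 0" using tm_nil[of "[:0,1:]"] by simp
  also have "\<dots> = 0" by (rule frobM_zero[OF Fadd])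
  finally show ?thesis .
qed

lemma sylv_step_unique:
  assumes n: "n > 0" and eq: "X ** frobM TYPE('k) n Dt = Dt ** X"
  shows "X = 0"
proof (rule syl_unique[of Nt "frobM TYPE('k) n Nt" "tL ^ (CARD('k) ^ n)" tL X])
  show "matpow Nt CARD('d) = 0" by (rule tm_nil)
  show "matpow (frobM TYPE('k) n Nt) CARD('d) = 0" by (rule nil_frob)
  show "tL ^ CARD('k) ^ n \<noteq> tL" by (rule theta_pow_ne[OF hom n])
  show "X ** (mat (tL ^ CARD('k) ^ n) + frobM TYPE('k) n Nt) = (mat tL + Nt) ** X"
    using eq unfolding frob_Dt by simp
qed

lemma sylv_step_exists:
  assumes n: "n > 0"
  shows "\<exists>X. X ** frobM TYPE('k) n Dt - Dt ** X = R"
  using syl_exists[of Nt "frobM TYPE('k) n Nt" "tL ^ (CARD('k) ^ n)" tL R] tm_nil nil_frob theta_pow_ne[OF hom n]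
  unfolding frob_Dt by simp

lemma sp_split: "sp TYPE('k) A B n = (\<Sum>i<n. A i ** frobM TYPE('k) i (B (n - i))) + A n ** frobM TYPE('k) n (B 0)"
  unfolding sp_def by (simp add: lessThan_Suc_atMost[symmetric])

lemma U:
  assumes F0: "F 0 = 0" and FE: "\<And>n. sp TYPE('k) F Et n = Dt ** F n"
  shows "F n = 0"
proof (induction n rule: less_induct)
  case (less n)
  show ?case
  proof (cases "n = 0")
    case True then show ?thesis using F0 by simp
  next
    case False
    have "sp TYPE('k) F Et n = F n ** frobM TYPE('k) n Dt"
      unfolding sp_split using less.IH by simp
    then have "F n ** frobM TYPE('k) n Dt = Dt ** F n" using FE by simp
    then show ?thesis using sylv_step_unique False by blast
  qed
qed

lemma exists_l_theta:
  "\<exists>l. l 0 = mat 1 \<and> (\<forall>n. sp TYPE('k) l Et n = Dt ** l n)"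
proof -
  define step where "step l n = (SOME X. X ** frobM TYPE('k) n Dt - Dt ** X
      = - (\<Sum>i<n. l i ** frobM TYPE('k) i (Et (n - i))))" for l :: "nat \<Rightarrow> 'l^'d^'d" and n
  have step: "step l n ** frobM TYPE('k) n Dt - Dt ** step l n
      = - (\<Sum>i<n. l i ** frobM TYPE('k) i (Et (n - i)))" if "n > 0" for l n
    unfolding step_def by (rule someI_ex) (rule sylv_step_exists[OF that])
  define lseq :: "nat \<Rightarrow> nat \<Rightarrow> 'l^'d^'d"
    where "lseq = rec_nat (\<lambda>_. mat 1) (\<lambda>n l. l(Suc n := step l (Suc n)))"
  have ls0: "lseq 0 = (\<lambda>_. mat 1)" and lsS: "lseq (Suc n) = (lseq n)(Suc n := step (lseq n) (Suc n))" for n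
    by (simp_all add: lseq_def)
  have stable: "lseq m i = lseq n i" if "i \<le> n" "n \<le> m" for i n m
    using that
  proof (induction m)
    case 0 then show ?case by simp
  next
    case (Suc m)
    show ?case
    proof (cases "n = Suc m")
      case True then show ?thesis by simp
    next
      case False
      then have "n \<le> m" using Suc.prems by simp
      then have "lseq m i = lseq n i" using Suc.IH Suc.prems by simp
      moreover have "i \<noteq> Suc m" using Suc.prems \<open>n \<le> m\<close> by simp
      ultimately show ?thesis by (simp add: lsS)
    qed
  qed
  define l where "l n = lseq n n" for n
  have l_eq: "l i = lseq n i" if "i \<le> n" for i n
    unfolding l_def using stable[OF order_refl that] by simp
  have "sp TYPE('k) l Et n = Dt ** l n" for n
  proof (cases n)
    case 0 then show ?thesis by (simp add: sp_0 l_def ls0)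
  next
    case (Suc m)
    have lS: "l (Suc m) = step (lseq m) (Suc m)" by (simp add: l_def lsS)
    have sums: "(\<Sum>i<Suc m. l i ** frobM TYPE('k) i (Et (Suc m - i)))
        = (\<Sum>i<Suc m. lseq m i ** frobM TYPE('k) i (Et (Suc m - i)))"
      by (rule sum.cong[OF refl]) (simp add: l_eq less_Suc_eq_le)
    have "sp TYPE('k) l Et (Suc m) = (\<Sum>i<Suc m. lseq m i ** frobM TYPE('k) i (Et (Suc m - i)))
        + step (lseq m) (Suc m) ** frobM TYPE('k) (Suc m) Dt"
      unfolding sp_split sums lS by simp
    also have "\<dots> = Dt ** l (Suc m)"
      using step[of "Suc m" "lseq m"] unfolding lS by (simp add: algebra_simps)
    finally show ?thesis using Suc by simp
  qed
  moreover have "l 0 = mat 1" by (simp add: l_def ls0)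
  ultimately show ?thesis by blast
qed

lemma Dt_comm: "E a 0 ** Dt = Dt ** E a 0"
proof -
  have "E (a * [:0,1:]) 0 = E ([:0,1:] * a) 0" by (simp only: mult.commute)
  thus ?thesis by (simp only: tm_mult[of a "[:0,1:]" 0] tm_mult[of "[:0,1:]" a 0] sp_0)
qed

lemma l_general:
  assumes l0: "l 0 = mat 1" and lt: "\<And>n. sp TYPE('k) l Et n = Dt ** l n"
  shows "sp TYPE('k) l (E a) n = E a 0 ** l n"
proof -
  define A0 where "A0 = E a 0"
  define F where "F = sp TYPE('k) l (E a) - sp TYPE('k) (cst A0) l"
  have Fn: "F n = sp TYPE('k) l (E a) n - A0 ** l n" for n
    by (simp add: F_def sp_cst_left)
  have F0: "F 0 = 0" by (simp add: Fn sp_0 l0 A0_def)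
  have lt': "sp TYPE('k) l Et = sp TYPE('k) (cst Dt) l"
    by (rule ext) (simp add: lt sp_cst_left)
  have Ea: "sp TYPE('k) Et (E a) = sp TYPE('k) (E a) Et"
    by (rule ext) (metis tm_mult mult.commute)
  have FE: "sp TYPE('k) F Et n = Dt ** F n" for n
  proof -
    have 1: "sp TYPE('k) (sp TYPE('k) l (E a)) Et n = Dt ** sp TYPE('k) l (E a) n"
    proof -
      have "sp TYPE('k) (sp TYPE('k) l (E a)) Et n = sp TYPE('k) l (sp TYPE('k) (E a) Et) n"
        by (rule sp_assoc[OF Fadd])
      also have "\<dots> = sp TYPE('k) l (sp TYPE('k) Et (E a)) n" by (simp add: Ea)
      also have "\<dots> = sp TYPE('k) (sp TYPE('k) l Et) (E a) n" by (rule sp_assoc[OF Fadd, symmetric])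
      also have "\<dots> = sp TYPE('k) (sp TYPE('k) (cst Dt) l) (E a) n" by (simp add: lt')
      also have "\<dots> = sp TYPE('k) (cst Dt) (sp TYPE('k) l (E a)) n" by (rule sp_assoc[OF Fadd])
      also have "\<dots> = Dt ** sp TYPE('k) l (E a) n" by (rule sp_cst_left)
      finally show ?thesis .
    qed
    have 2: "sp TYPE('k) (sp TYPE('k) (cst A0) l) Et n = Dt ** (A0 ** l n)"
    proof -
      have "sp TYPE('k) (sp TYPE('k) (cst A0) l) Et n = sp TYPE('k) (cst A0) (sp TYPE('k) l Et) n"
        by (rule sp_assoc[OF Fadd])
      also have "\<dots> = A0 ** (Dt ** l n)" by (simp add: sp_cst_left lt)
      also have "\<dots> = Dt ** (A0 ** l n)"
        by (simp add: matrix_mul_assoc Dt_comm A0_def)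
      finally show ?thesis .
    qed
    have "sp TYPE('k) F Et n = sp TYPE('k) (sp TYPE('k) l (E a)) Et n - sp TYPE('k) (sp TYPE('k) (cst A0) l) Et n"
      unfolding F_def by (rule sp_diff_left)
    also have "\<dots> = Dt ** F n" unfolding 1 2 Fn by (simp add: matrix_diff_ldistrib')
    finally show ?thesis .
  qed
  have "F n = 0" by (rule U[OF F0 FE])
  thus ?thesis by (simp add: Fn A0_def)
qed

lemma logE_0: "logE E 0 = mat 1"
proof -
  define P where "P l \<longleftrightarrow> l 0 = mat 1 \<and>
     (\<forall>a n. (\<Sum>i\<le>n. l i ** frobM TYPE('k) i (E a (n - i))) = E a 0 ** l n)" for l
  have Psp: "P l \<longleftrightarrow> l 0 = mat 1 \<and> (\<forall>a n. sp TYPE('k) l (E a) n = E a 0 ** l n)" for l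
    unfolding P_def sp_def by simp
  obtain l where l: "l 0 = mat 1" "\<And>n. sp TYPE('k) l Et n = Dt ** l n"
    using exists_l_theta by blast
  have Pl: "P l" unfolding Psp using l l_general by blast
  have uniq: "l' = l" if "P l'" for l'
  proof
    fix n
    define F where "F = l' - l"
    have "F 0 = 0" using that Pl by (simp add: Psp F_def)
    moreover have "sp TYPE('k) F Et n = Dt ** F n" for n
      using that Pl unfolding Psp F_def by (simp add: sp_diff_left matrix_diff_ldistrib')
    ultimately have "F n = 0" by (rule U)
    thus "l' n = l n" by (simp add: F_def)
  qed
  have "logE E = l"
    unfolding logE_def using Pl uniq unfolding P_def by (rule the_equality)
  thus ?thesis using l by simp
qed

end



lemma K_indep:
  fixes \<iota> :: "'k::field poly fract \<Rightarrow> 'l::field" and f :: "'b::finite \<Rightarrow> 'l"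
  assumes hom: "is_ring_hom \<iota>" and bas: "is_A_basis \<iota> f"
    and z: "(\<Sum>b\<in>UNIV. \<iota> (e b) * f b) = 0"
  shows "e b = 0"
proof -
  have "\<forall>b. \<exists>p. e b = Fract (fst p) (snd p) \<and> snd p \<noteq> 0"
  proof
    fix b show "\<exists>p. e b = Fract (fst p) (snd p) \<and> snd p \<noteq> 0"
      by (cases "e b") auto
  qed
  then obtain g where g: "\<And>b. e b = Fract (fst (g b)) (snd (g b)) \<and> snd (g b) \<noteq> 0"
    by metis
  define nb where "nb b = fst (g b)" for b
  define db where "db b = snd (g b)" for b
  have e: "e b = Fract (nb b) (db b)" and db0: "db b \<noteq> 0" for b using g by (auto simp: nb_def db_def)
  define D where "D = (\<Prod>b\<in>UNIV. db b)"
  define Db where "Db b = (\<Prod>b'\<in>UNIV - {b}. db b')" for b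
  have D0: "D \<noteq> 0" using db0 by (simp add: D_def)
  have Db0: "Db b \<noteq> 0" for b using db0 by (simp add: Db_def)
  have DDb: "D = db b * Db b" for b unfolding D_def Db_def
    by (rule prod.remove) auto
  define c where "c b = nb b * Db b" for b
  have ce: "Fract (c b) 1 = Fract D 1 * e b" for b
    using db0[of b] DDb[of b] by (simp add: c_def e eq_fract mult_ac)
  have "(\<Sum>b\<in>UNIV. embA \<iota> (c b) * f b) = \<iota> (Fract D 1) * (\<Sum>b\<in>UNIV. \<iota> (e b) * f b)"
    unfolding embA_def ce using hom by (simp add: is_ring_hom_def sum_distrib_left mult_ac)
  also have "\<dots> = 0" using z by simp
  finally have "\<forall>b. c b = 0" using bas unfolding is_A_basis_def by blast
  then have "nb b = 0" using Db0[of b] by (auto simp: c_def)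
  thus ?thesis unfolding e by (metis Zero_fract_def eq_fract(3))
qed

lemma coordK_eq:
  fixes \<iota> :: "'k::field poly fract \<Rightarrow> 'l::field" and f :: "'b::finite \<Rightarrow> 'l"
  assumes hom: "is_ring_hom \<iota>" and bas: "is_A_basis \<iota> f"
    and x: "x = (\<Sum>b\<in>UNIV. \<iota> (c b) * f b)"
  shows "coordK \<iota> f x = c"
  unfolding coordK_def
proof (rule the_equality)
  show "x = (\<Sum>b\<in>UNIV. \<iota> (c b) * f b)" by (rule x)
  fix c' assume c': "x = (\<Sum>b\<in>UNIV. \<iota> (c' b) * f b)"
  have "(\<Sum>b\<in>UNIV. \<iota> (c' b - c b) * f b) = 0"
    using c' x by (simp add: ring_hom_diff[OF hom] algebra_simps sum_subtractf)
  then have "c' b - c b = 0" for b by (rule K_indep[OF hom bas])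
  thus "c' = c" by auto
qed

lemma coordK_basis:
  fixes \<iota> :: "'k::field poly fract \<Rightarrow> 'l::field" and f :: "'b::finite \<Rightarrow> 'l"
  assumes hom: "is_ring_hom \<iota>" and bas: "is_A_basis \<iota> f"
  shows "coordK \<iota> f (f i) = (\<lambda>k. if k = i then 1 else 0)"
  by (rule coordK_eq[OF hom bas]) (use hom in \<open>simp add: is_ring_hom_def if_distrib if_distribR cong: if_cong\<close>)

lemma coordK_zero:
  fixes \<iota> :: "'k::field poly fract \<Rightarrow> 'l::field" and f :: "'b::finite \<Rightarrow> 'l"
  assumes hom: "is_ring_hom \<iota>" and bas: "is_A_basis \<iota> f"
  shows "coordK \<iota> f 0 = (\<lambda>k. 0)"
  by (rule coordK_eq[OF hom bas]) (use hom in \<open>simp add: is_ring_hom_def\<close>)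

lemma matLP_id:
  fixes \<iota> :: "'k::field poly fract \<Rightarrow> 'l::field" and f :: "'b::finite \<Rightarrow> 'l"
    and j :: "'k poly fract \<Rightarrow> 'kp::field"
  assumes hom: "is_ring_hom \<iota>" and bas: "is_A_basis \<iota> f" and hj: "is_ring_hom j"
  shows "matLP \<iota> j f (mat 1 :: 'l^'d::finite^'d) Y = Y"
proof (intro ext)
  fix r k m
  have inner: "(\<Sum>i\<in>UNIV. j (coordK \<iota> f ((mat 1 :: 'l^'d^'d) $ r $ s * f i) k) * Y s i m)
      = (if s = r then Y r k m else 0)" for s
  proof (cases "s = r")
    case True
    then have "(\<Sum>i\<in>UNIV. j (coordK \<iota> f ((mat 1 :: 'l^'d^'d) $ r $ s * f i) k) * Y s i m)
        = (\<Sum>i\<in>UNIV. (if k = i then Y r i m else 0))"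
      using hj by (intro sum.cong refl) (simp add: mat_def coordK_basis[OF hom bas] is_ring_hom_def)
    also have "\<dots> = Y r k m" by simp
    finally show ?thesis using True by simp
  next
    case False
    then show ?thesis using hj by (simp add: mat_def coordK_zero[OF hom bas] is_ring_hom_def)
  qed
  show "matLP \<iota> j f (mat 1) Y r k m = Y r k m"
    unfolding matLP_def inner by simp
qed

lemma tau_local:
  assumes "\<And>r k. Y r k m = Y' r k m"
  shows "(tauLP t \<iota> j f ^^ n) Y r k m = (tauLP t \<iota> j f ^^ n) Y' r k m"
  using assms
proof (induction n arbitrary: r k)
  case 0 then show ?case by simp
next
  case (Suc n)
  then show ?case by (simp add: tauLP_def)
qed

lemma matLP_local:
  assumes "\<And>r k. Y r k m = Y' r k m"
  shows "matLP \<iota> j f M Y r k m = matLP \<iota> j f M Y' r k m"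
  using assms by (simp add: matLP_def)


theorem mainTheorem18:
  fixes \<iota> :: "'k::{finite,field_gcd} poly fract \<Rightarrow> 'l::field"
    and E :: "'k poly \<Rightarrow> nat \<Rightarrow> 'l^'d::finite^'d"
    and f :: "'b::finite \<Rightarrow> 'l"
    and P :: "'k poly"
    and j :: "'k poly fract \<Rightarrow> 'kp::field"
    and w :: "'kp \<Rightarrow> ereal"
  assumes "is_ring_hom \<iota>"
    and "finite_ext \<iota>"
    and "is_A_basis \<iota> f"
    and "is_t_module \<iota> E"
    and "lead_coeff P = 1" and "irreducible P"
    and "is_P_adic_completion P j w"
  shows "inj_on (logEP \<iota> j f E) (Omega_plus w)"
proof (rule inj_onI)
  have hom: "is_ring_hom \<iota>" and bas: "is_A_basis \<iota> f" and tm: "is_t_module \<iota> E"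
    using assms by simp_all
  have hj: "is_ring_hom j" using assms(7) unfolding is_P_adic_completion_def by blast
  have l0: "logE E 0 = mat 1" by (rule logE_0[OF hom tm])
  fix Y Y' assume eq: "logEP \<iota> j f E Y = logEP \<iota> j f E Y'"
  have mid: "matLP \<iota> j f (mat 1 :: 'l^'d^'d) Z = Z" for Z :: "'d \<Rightarrow> 'b \<Rightarrow> nat \<Rightarrow> 'kp"
    by (rule matLP_id[OF hom bas hj])
  have split: "logEP \<iota> j f E Z r k m = Z r k m
      + (\<Sum>i<m. matLP \<iota> j f (logE E (Suc i)) ((tauLP TYPE('k) \<iota> j f ^^ Suc i) Z) r k (m - Suc i))"
    for Z r k m
    unfolding logEP_def sum.atMost_shift by (simp add: l0 mid)
  have "\<forall>r k. Y r k m = Y' r k m" for m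
  proof (induction m rule: less_induct)
    case (less m)
    show ?case
    proof (intro allI)
      fix r k
      have "(\<Sum>i<m. matLP \<iota> j f (logE E (Suc i)) ((tauLP TYPE('k) \<iota> j f ^^ Suc i) Y) r k (m - Suc i))
          = (\<Sum>i<m. matLP \<iota> j f (logE E (Suc i)) ((tauLP TYPE('k) \<iota> j f ^^ Suc i) Y') r k (m - Suc i))"
      proof (rule sum.cong[OF refl])
        fix i assume "i \<in> {..<m}"
        then have "m - Suc i < m" by auto
        then have "\<And>r k. Y r k (m - Suc i) = Y' r k (m - Suc i)" using less.IH by blast
        then have "\<And>r k. (tauLP TYPE('k) \<iota> j f ^^ Suc i) Y r k (m - Suc i)
                       = (tauLP TYPE('k) \<iota> j f ^^ Suc i) Y' r k (m - Suc i)"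
          by (rule tau_local)
        then show "matLP \<iota> j f (logE E (Suc i)) ((tauLP TYPE('k) \<iota> j f ^^ Suc i) Y) r k (m - Suc i)
          = matLP \<iota> j f (logE E (Suc i)) ((tauLP TYPE('k) \<iota> j f ^^ Suc i) Y') r k (m - Suc i)"
          by (rule matLP_local)
      qed
      moreover have "logEP \<iota> j f E Y r k m = logEP \<iota> j f E Y' r k m" using eq by simp
      ultimately show "Y r k m = Y' r k m" unfolding split by simp
    qed
  qed
  then show "Y = Y'" by (intro ext) blast
qed


end
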